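(* Let $(N,+,* )$ be a nilpotent ring with adjoint operation $x\circ y=x+y+x*y$, let $S$ be a subring and $I$ a two-sided ideal of $N$ with $S\cap I=\{0\}$ and $N=S+I$. Then every $x\in N$ can be written uniquely as $x=s\circ i$ with $s\in S$, $i\in I$; define $x\bullet y=s\circ y\circ i$, so that $(N,+,\bullet)$ is a left brace, and let $r$ be its Yang–Baxter map. Let $X\subseteq N$ be such that $(X,r)$ is a solution of the set-theoretic Yang–Baxter equation, and let $J\subseteq I\cap X$ be a two-sided ideal of the ring $N$. Let $g:X\to X$ satisfy, for every $x\in X$: $g(x)*z=z*g(x)$ for all $z\in I$; $g(x+j)=g(x)$ whenever $j\in J$ and $x+j\in X$; $g(x)\in J$; and $g(x)\circ g(x)=0$. Suppose $k(x)=x+x*g(x)$ satisfies $k(X)\subseteq X$. Then $k$ is a reflection of $(X,r)$ and $k\circ k=\mathrm{id}_X$.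
   Context: A (left) brace is a triple $(B,+,\circ)$ with $(B,+)$ abelian group, $(B,\circ)$ group, and $x\circ(y+z)=x\circ y+x\circ z-x$. The Yang–Baxter map of the brace $(N,+,\bullet)$ is $r(x,y)=(\sigma_x(y),\tau_y(x))$ with $\sigma_x(y)=x\bullet y-x$ and $\tau_y(x)=(\sigma_x(y))^{-1}\bullet x-(\sigma_x(y))^{-1}$, inverses taken in $(N,\bullet)$. For $X\subseteq N$, $(X,r)$ is a solution of the set-theoretic Yang–Baxter equation if $r(X\times X)\subseteq X\times X$ and $(\mathrm{id}\times r)(r\times\mathrm{id})(\mathrm{id}\times r)=(r\times\mathrm{id})(\mathrm{id}\times r)(r\times\mathrm{id})$ on $X^3$. A map $k:X\to X$ is a reflection of $(X,r)$ if $r(\mathrm{id}\times k)r(\mathrm{id}\times k)=(\mathrm{id}\times k)r(\mathrm{id}\times k)r$ on $X\times X$. *)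

theory Defs
  imports Main
begin

text \<open>Rings are possibly non-unital: the type class ring (semiring + ab_group_add).\<close>

fun rprod :: "'a::ring list \<Rightarrow> 'a" where
  "rprod [] = 0"
| "rprod [x] = x"
| "rprod (x # y # xs) = x * rprod (y # xs)"

definition nilpotent_ring :: "'a::ring itself \<Rightarrow> bool" where
  "nilpotent_ring _ \<longleftrightarrow> (\<exists>n\<ge>1. \<forall>xs::'a list. length xs = n \<longrightarrow> rprod xs = 0)"

definition adj :: "'a::ring \<Rightarrow> 'a \<Rightarrow> 'a" where
  "adj x y = x + y + x * y"

definition is_subring :: "'a::ring set \<Rightarrow> bool" where
  "is_subring S \<longleftrightarrow> 0 \<in> S \<and> (\<forall>x\<in>S. \<forall>y\<in>S. x + y \<in> S \<and> x * y \<in> S) \<and> (\<forall>x\<in>S. - x \<in> S)"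

definition is_ideal :: "'a::ring set \<Rightarrow> bool" where
  "is_ideal I \<longleftrightarrow> 0 \<in> I \<and> (\<forall>x\<in>I. \<forall>y\<in>I. x + y \<in> I) \<and> (\<forall>x\<in>I. - x \<in> I)
     \<and> (\<forall>x\<in>I. \<forall>z. z * x \<in> I \<and> x * z \<in> I)"

definition decomp :: "'a::ring set \<Rightarrow> 'a set \<Rightarrow> 'a \<Rightarrow> 'a \<times> 'a" where
  "decomp S I x = (THE p. fst p \<in> S \<and> snd p \<in> I \<and> x = adj (fst p) (snd p))"

definition bullet :: "'a::ring set \<Rightarrow> 'a set \<Rightarrow> 'a \<Rightarrow> 'a \<Rightarrow> 'a" where
  "bullet S I x y = adj (adj (fst (decomp S I x)) y) (snd (decomp S I x))"

definition binv :: "'a::ring set \<Rightarrow> 'a set \<Rightarrow> 'a \<Rightarrow> 'a" where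
  "binv S I x = (THE y. bullet S I x y = 0 \<and> bullet S I y x = 0)"

definition ybmap :: "'a::ring set \<Rightarrow> 'a set \<Rightarrow> 'a \<times> 'a \<Rightarrow> 'a \<times> 'a" where
  "ybmap S I p = (let x = fst p; y = snd p; s = bullet S I x y - x; t = binv S I s
                  in (s, bullet S I t x - t))"

definition r12 :: "('a \<times> 'a \<Rightarrow> 'a \<times> 'a) \<Rightarrow> 'a \<times> 'a \<times> 'a \<Rightarrow> 'a \<times> 'a \<times> 'a" where
  "r12 r t = (case t of (x, y, z) \<Rightarrow> (fst (r (x, y)), snd (r (x, y)), z))"

definition r23 :: "('a \<times> 'a \<Rightarrow> 'a \<times> 'a) \<Rightarrow> 'a \<times> 'a \<times> 'a \<Rightarrow> 'a \<times> 'a \<times> 'a" where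
  "r23 r t = (case t of (x, y, z) \<Rightarrow> (x, fst (r (y, z)), snd (r (y, z))))"

definition is_solution :: "'a set \<Rightarrow> ('a \<times> 'a \<Rightarrow> 'a \<times> 'a) \<Rightarrow> bool" where
  "is_solution X r \<longleftrightarrow> (\<forall>x\<in>X. \<forall>y\<in>X. r (x, y) \<in> X \<times> X)
     \<and> (\<forall>x\<in>X. \<forall>y\<in>X. \<forall>z\<in>X. (r23 r \<circ> r12 r \<circ> r23 r) (x, y, z) = (r12 r \<circ> r23 r \<circ> r12 r) (x, y, z))"

definition id_times :: "('a \<Rightarrow> 'a) \<Rightarrow> 'a \<times> 'a \<Rightarrow> 'a \<times> 'a" where
  "id_times k p = (fst p, k (snd p))"

definition is_reflection :: "'a set \<Rightarrow> ('a \<times> 'a \<Rightarrow> 'a \<times> 'a) \<Rightarrow> ('a \<Rightarrow> 'a) \<Rightarrow> bool" where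
  "is_reflection X r k \<longleftrightarrow> (\<forall>x\<in>X. \<forall>y\<in>X.
     (r \<circ> id_times k \<circ> r \<circ> id_times k) (x, y) = (id_times k \<circ> r \<circ> id_times k \<circ> r) (x, y))"

end

theory Submission
  imports Defs
begin


lemma adj_assoc: "adj (adj a b) c = adj a (adj b (c::'a::ring))"
  by (simp add: adj_def algebra_simps)
lemma adj_0 [simp]: "adj 0 x = x" "adj x 0 = (x::'a::ring)" by (simp_all add: adj_def)

lemma adj_inv_unique: "adj y x = 0 \<Longrightarrow> adj x z = 0 \<Longrightarrow> y = (z::'a::ring)"
  by (metis adj_0 adj_assoc)

fun qq :: "'a::ring \<Rightarrow> nat \<Rightarrow> 'a" where
  "qq x 0 = - x" | "qq x (Suc n) = - x - x * qq x n"

definition PP :: "'a::ring \<Rightarrow> nat \<Rightarrow> 'a" where "PP x n = rprod (replicate (Suc n) x)"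

lemma PP_Suc: "PP x (Suc n) = x * PP x n" by (simp add: PP_def)

lemma PP_zero: assumes "nilpotent_ring TYPE('a::ring)" shows "\<exists>N. \<forall>x::'a. PP x N = 0"
proof -
  obtain n where n: "n \<ge> 1" "\<forall>xs::'a list. length xs = n \<longrightarrow> rprod xs = 0"
    using assms unfolding nilpotent_ring_def by blast
  have "PP x (n - 1) = 0" for x :: 'a
    using n(2)[rule_format, of "replicate n x"] n(1) by (simp add: PP_def)
  thus ?thesis by blast
qed

lemma qq_e: "x + qq x n + x * qq x n = PP x (Suc n) \<or> x + qq x n + x * qq x n = - PP x (Suc n)"
proof (induction n)
  case 0 show ?case by (simp add: PP_def)
next
  case (Suc n)
  have eq: "x + qq x (Suc n) + x * qq x (Suc n) = - (x * (x + qq x n + x * qq x n))"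
    by (simp add: algebra_simps)
  from Suc show ?case unfolding eq by (auto simp: PP_Suc[of x "Suc n"])
qed

lemma qq_comm: "x * qq x n = qq x n * x"
proof (induction n)
  case 0 show ?case by simp
next
  case (Suc n)
  have "x * (x * qq x n) = x * (qq x n * x)" using Suc by simp
  then show ?case by (simp add: algebra_simps)
qed

definition ainv :: "'a::ring \<Rightarrow> 'a" where
  "ainv x = (SOME y. adj x y = 0 \<and> adj y x = 0)"

lemma qq_inv: assumes "nilpotent_ring TYPE('a::ring)"
  shows "\<exists>n. \<forall>x::'a. adj x (qq x n) = 0 \<and> adj (qq x n) x = 0"
proof -
  obtain N where N: "\<forall>x::'a. PP x N = 0" using PP_zero[OF assms] by blast
  have "PP x (Suc N) = 0" for x :: 'a using N by (simp add: PP_Suc)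
  then have "adj x (qq x N) = 0" for x :: 'a using qq_e[of x N] by (auto simp: adj_def)
  moreover have "adj (qq x N) x = adj x (qq x N)" for x :: 'a
    by (simp add: adj_def qq_comm algebra_simps)
  ultimately show ?thesis by metis
qed

context fixes dummy :: "'a::ring itself"
  assumes nil: "nilpotent_ring TYPE('a)"
begin

lemma ainv: "adj x (ainv x) = 0" "adj (ainv x) x = (0::'a)"
proof -
  obtain n where "\<forall>x::'a. adj x (qq x n) = 0 \<and> adj (qq x n) x = 0" using qq_inv[OF nil] by blast
  then have "\<exists>y. adj x y = 0 \<and> adj y x = 0" by blast
  then show "adj x (ainv x) = 0" "adj (ainv x) x = (0::'a)" unfolding ainv_def
    by (metis (mono_tags, lifting) someI_ex)+
qed

lemma ainv_qq: "\<exists>n. \<forall>x::'a. ainv x = qq x n"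
proof -
  obtain n where n: "\<forall>x::'a. adj x (qq x n) = 0 \<and> adj (qq x n) x = 0" using qq_inv[OF nil] by blast
  have "ainv x = qq x n" for x :: 'a using adj_inv_unique[OF ainv(2)[of x]] n by blast
  then show ?thesis by blast
qed

lemma ainv_S: assumes S: "is_subring S" and x: "(x::'a) \<in> S" shows "ainv x \<in> S"
proof -
  obtain n where n: "\<forall>x::'a. ainv x = qq x n" using ainv_qq by blast
  have "qq x m \<in> S" for m
  proof (induction m)
    case 0 then show ?case using S x by (simp add: is_subring_def)
  next
    case (Suc m)
    have "- x + - (x * qq x m) \<in> S" using S x Suc unfolding is_subring_def by blast
    then show ?case by simp
  qed
  then show ?thesis using n by simp
qed

lemma ainv_I: assumes I: "is_ideal I" and x: "(x::'a) \<in> I" shows "ainv x \<in> I"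
proof -
  have "ainv x = - x + - (x * ainv x)" using ainv(1)[of x] unfolding adj_def
    by (metis add.assoc add_eq_0_iff add_uminus_conv_diff diff_minus_eq_add minus_add_distrib)
  also have "\<dots> \<in> I" using I x unfolding is_ideal_def by blast
  finally show ?thesis .
qed

lemma ainv_J: assumes J: "is_ideal J" and d: "(i'::'a) - i \<in> J" shows "ainv i' - ainv i \<in> J"
proof -
  define p where "p = ainv i"
  define p' where "p' = ainv i'"
  have e1: "i + p + i*p = 0" using ainv(1)[of i] unfolding p_def adj_def .
  have e2: "p' + i' + p'*i' = 0" using ainv(2)[of i'] unfolding p'_def adj_def .
  define j where "j = i' - i"
  have "p' - p = - (j + p'*j + j*p + p'*j*p) + (p' + i' + p'*i') - (i + p + i*p)
     - p'*(i + p + i*p) + (p' + i' + p'*i')*p"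
    unfolding j_def by (simp add: algebra_simps)
  also have "\<dots> = - (j + (p'*j + (j*p + p'*j*p)))" using e1 e2 by (simp add: add.assoc)
  also have "\<dots> \<in> J" using J d unfolding is_ideal_def j_def by (metis mult.assoc)
  finally show ?thesis unfolding p_def p'_def .
qed

end


definition LL :: "'a::ring \<Rightarrow> 'a \<Rightarrow> 'a \<Rightarrow> 'a" where
  "LL a b w = w + a*w + w*b + a*(w*b)"

lemma LL_comp: "LL a b (LL a' b' w) = LL (adj a a') (adj b' b) w"
  by (simp add: LL_def adj_def algebra_simps)

lemma LL_0: "LL 0 0 w = w" by (simp add: LL_def)

lemma LL_mult: assumes "b*g = g*b" shows "LL a b (w + w*g) = LL a b w + LL a b w * (g::'a::ring)"
proof -
  have h: "w*(g*b) = w*(b*g)" using assms by simp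
  then have "a*(w*(g*b)) = a*(w*(b*g))" by simp
  then show ?thesis using h by (simp add: LL_def algebra_simps)
qed

context
  fixes S I :: "'a::ring set"
  assumes nil: "nilpotent_ring TYPE('a)"
    and S: "is_subring S" and I: "is_ideal I"
    and SI: "S \<inter> I = {0}" and sum: "\<forall>x. \<exists>s\<in>S. \<exists>i\<in>I. x = s + i"
begin

lemma adj_S: "a \<in> S \<Longrightarrow> b \<in> S \<Longrightarrow> adj a b \<in> S"
  using S unfolding is_subring_def adj_def by blast
lemma adj_I: "a \<in> I \<Longrightarrow> b \<in> I \<Longrightarrow> adj a b \<in> I"
  using I unfolding is_ideal_def adj_def by blast

lemma decomp_unique:
  assumes "s \<in> S" "i \<in> I" "s' \<in> S" "i' \<in> I" "adj s i = adj s' i'"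
  shows "s = s' \<and> i = i'"
proof -
  have "s - s' = (i' + s'*i') + - (i + s*i)" using assms(5) unfolding adj_def
    by (simp add: algebra_simps)
  also have "\<dots> \<in> I" using I assms unfolding is_ideal_def by blast
  finally have "s - s' \<in> I" .
  moreover have "s + - s' \<in> S" using S assms unfolding is_subring_def by blast
  ultimately have "s - s' \<in> S \<inter> I" by simp
  then have "s - s' \<in> {0}" using SI by blast
  then have "s - s' = 0" by blast
  then have ss: "s = s'" by simp
  define d where "d = i - i'"
  have d0: "d + s*d = 0" using assms(5) ss unfolding adj_def d_def by (simp add: algebra_simps)
  have "d = (d + s*d) + ainv s * (d + s*d) - (ainv s + s + ainv s * s) * d"
    by (simp add: algebra_simps)
  also have "\<dots> = 0" using d0 ainv(2)[OF nil, of s] unfolding adj_def by simp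
  finally show ?thesis using ss d_def by simp
qed

lemma decomp_exists: "\<exists>s\<in>S. \<exists>i\<in>I. x = adj s i"
proof -
  obtain s i0 where si: "s \<in> S" "i0 \<in> I" "x = s + i0" using sum by blast
  define i where "i = i0 + ainv s * i0"
  have "i \<in> I" using I si unfolding i_def is_ideal_def by blast
  moreover have "adj s i = s + i0 + (s + ainv s + s * ainv s) * i0"
    unfolding adj_def i_def by (simp add: algebra_simps)
  then have "adj s i = x" using ainv(1)[OF nil, of s] si unfolding adj_def by simp
  ultimately show ?thesis using si by metis
qed

lemma decomp_eq: "s \<in> S \<Longrightarrow> i \<in> I \<Longrightarrow> decomp S I (adj s i) = (s, i)"
  unfolding decomp_def
  by (rule the_equality) (use decomp_unique in auto)

lemma decomp_prop: "fst (decomp S I x) \<in> S \<and> snd (decomp S I x) \<in> I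
   \<and> x = adj (fst (decomp S I x)) (snd (decomp S I x))"
proof -
  obtain s i where "s \<in> S" "i \<in> I" "x = adj s i" using decomp_exists by blast
  then show ?thesis using decomp_eq by auto
qed

lemma sigma_LL: "bullet S I x y - x = LL (fst (decomp S I x)) (snd (decomp S I x)) y"
proof -
  obtain s i where e: "decomp S I x = (s, i)" by (cases "decomp S I x")
  have x: "x = adj s i" using decomp_prop e by (metis fst_conv snd_conv)
  have "adj (adj s y) i - adj s i = LL s i y" by (simp add: adj_def LL_def algebra_simps)
  then show ?thesis unfolding bullet_def e using x by simp
qed

end


lemma LL_diff: "LL a b w - LL a b' w = (w + a*w) * (b - (b'::'a::ring))"
  by (simp add: LL_def algebra_simps)

context
  fixes S I :: "'a::ring set"
  assumes nil: "nilpotent_ring TYPE('a)"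
    and S: "is_subring S" and I: "is_ideal I"
    and SI: "S \<inter> I = {0}" and sum: "\<forall>x. \<exists>s\<in>S. \<exists>i\<in>I. x = s + i"
begin

lemmas ctx = nil S I SI sum

lemma binv_eq: assumes e: "decomp S I z = (s, i)"
  shows "binv S I z = adj (ainv s) (ainv i)"
proof -
  have si: "s \<in> S" "i \<in> I" "z = adj s i" using decomp_prop[OF ctx, of z] e by auto
  have ai: "ainv s \<in> S" "ainv i \<in> I" using ainv_S[OF nil S] ainv_I[OF nil I] si by auto
  let ?t = "adj (ainv s) (ainv i)"
  have dt: "decomp S I ?t = (ainv s, ainv i)" using decomp_eq[OF ctx] ai by blast
  have b1: "bullet S I z ?t = 0"
    unfolding bullet_def e fst_conv snd_conv
    by (simp add: adj_assoc[symmetric] ainv[OF nil])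
  have b2: "bullet S I ?t z = 0"
    unfolding bullet_def dt fst_conv snd_conv si(3)
    by (simp add: adj_assoc[symmetric] ainv[OF nil])
  show ?thesis unfolding binv_def
  proof (rule the_equality)
    show "bullet S I z ?t = 0 \<and> bullet S I ?t z = 0" using b1 b2 by blast
  next
    fix t assume "bullet S I z t = 0 \<and> bullet S I t z = 0"
    then have h: "bullet S I z t = 0" by blast
    obtain s' i' where e': "decomp S I t = (s', i')" by (cases "decomp S I t")
    have si': "s' \<in> S" "i' \<in> I" "t = adj s' i'" using decomp_prop[OF ctx, of t] e' by auto
    have "adj (adj s s') (adj i' i) = adj 0 0"
      using h unfolding bullet_def e fst_conv snd_conv si'(3) by (simp add: adj_assoc)
    moreover have "adj s s' \<in> S" using adj_S[OF ctx] si si' by blast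
    moreover have "adj i' i \<in> I" using adj_I[OF ctx] si si' by blast
    moreover have "(0::'a) \<in> S" "(0::'a) \<in> I" using S I unfolding is_subring_def is_ideal_def by auto
    ultimately have h1: "adj s s' = 0" and h2: "adj i' i = 0"
      using decomp_unique[OF ctx, of "adj s s'" "adj i' i" 0 0] by auto
    have "s' = ainv s" using adj_inv_unique[OF ainv(2)[OF nil, of s] h1] by simp
    moreover have "i' = ainv i" using adj_inv_unique[OF h2 ainv(1)[OF nil, of i]] .
    ultimately show "t = ?t" using si' by simp
  qed
qed

lemma rho_LL: assumes e: "decomp S I z = (s, i)"
  shows "bullet S I (binv S I z) w - binv S I z = LL (ainv s) (ainv i) w"
proof -
  have si: "s \<in> S" "i \<in> I" using decomp_prop[OF ctx, of z] e by auto
  have ai: "ainv s \<in> S" "ainv i \<in> I" using ainv_S[OF nil S] ainv_I[OF nil I] si by auto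
  have dt: "decomp S I (binv S I z) = (ainv s, ainv i)"
    using decomp_eq[OF ctx] ai binv_eq[OF e] by simp
  show ?thesis using sigma_LL[OF ctx, of "binv S I z" w] dt by simp
qed

lemma shift: assumes J: "is_ideal J" "J \<subseteq> I" and j: "j \<in> J" and e: "decomp S I z = (s, i)"
  shows "decomp S I (z + j) = (s, i + j + ainv s * j)"
proof -
  have si: "s \<in> S" "i \<in> I" "z = adj s i" using decomp_prop[OF ctx, of z] e by auto
  have jI: "j \<in> I" using J j by blast
  have I1: "\<And>x y. x \<in> I \<Longrightarrow> y \<in> I \<Longrightarrow> x + y \<in> I" and I2: "\<And>x z. x \<in> I \<Longrightarrow> z * x \<in> I"
    using I unfolding is_ideal_def by blast+
  have m: "i + j + ainv s * j \<in> I" by (rule I1[OF I1[OF si(2) jI] I2[OF jI]])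
  have a0: "s + ainv s + s * ainv s = 0" using ainv(1)[OF nil, of s] unfolding adj_def .
  have "adj s (i + j + ainv s * j) = adj s i + j + (s + ainv s + s * ainv s) * j"
    unfolding adj_def by (simp add: algebra_simps)
  also have "\<dots> = z + j" unfolding a0 si(3) by simp
  finally have h: "adj s (i + j + ainv s * j) = z + j" .
  show ?thesis using decomp_eq[OF ctx si(1) m] unfolding h .
qed

definition "rh z w = bullet S I (binv S I z) w - binv S I z"
definition "sg z w = bullet S I z w - z"

lemma rh_shift: assumes J: "is_ideal J" "J \<subseteq> I" and d: "z' - z \<in> J"
  shows "rh z' w - rh z w \<in> J"
proof -
  obtain s i where e: "decomp S I z = (s, i)" by (cases "decomp S I z")
  obtain j where j: "j = z' - z" by blast
  have z': "z' = z + j" using j by simp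
  have jJ: "j \<in> J" using d j by simp
  have e': "decomp S I z' = (s, i + j + ainv s * j)" unfolding z' using shift[OF J jJ e] .
  have "j + ainv s * j \<in> J" using J(1) jJ unfolding is_ideal_def by blast
  moreover have "(i + j + ainv s * j) - i = j + ainv s * j" by (simp add: algebra_simps)
  ultimately have "(i + j + ainv s * j) - i \<in> J" by simp
  then have aj: "ainv (i + j + ainv s * j) - ainv i \<in> J" using ainv_J[OF nil J(1)] by blast
  have "rh z' w - rh z w = (w + ainv s * w) * (ainv (i + j + ainv s * j) - ainv i)"
    unfolding rh_def rho_LL[OF e'] rho_LL[OF e] by (rule LL_diff)
  also have "\<dots> \<in> J" using aj J(1) unfolding is_ideal_def by blast
  finally show ?thesis .
qed

lemma sg_rh: "sg u (rh u x) = x"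
proof -
  obtain s i where e: "decomp S I u = (s, i)" by (cases "decomp S I u")
  show ?thesis unfolding sg_def rh_def sigma_LL[OF ctx, of u] rho_LL[OF e] e fst_conv snd_conv
    LL_comp ainv[OF nil] LL_0 ..
qed

lemma rh_sg: "rh u (sg u y) = y"
proof -
  obtain s i where e: "decomp S I u = (s, i)" by (cases "decomp S I u")
  show ?thesis unfolding sg_def rh_def sigma_LL[OF ctx, of u] rho_LL[OF e] e fst_conv snd_conv
    LL_comp ainv[OF nil] LL_0 ..
qed

lemma sg_mult: assumes "\<forall>z\<in>I. g * z = z * g" shows "sg u (w + w * g) = sg u w + sg u w * g"
proof -
  obtain s i where e: "decomp S I u = (s, i)" by (cases "decomp S I u")
  have "i \<in> I" using decomp_prop[OF ctx, of u] e by auto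
  then have "i * g = g * i" using assms by simp
  then show ?thesis unfolding sg_def sigma_LL[OF ctx, of u] e fst_conv snd_conv
    by (rule LL_mult)
qed

lemma rh_mult: assumes "\<forall>z\<in>I. g * z = z * g" shows "rh u (w + w * g) = rh u w + rh u w * g"
proof -
  obtain s i where e: "decomp S I u = (s, i)" by (cases "decomp S I u")
  have "i \<in> I" using decomp_prop[OF ctx, of u] e by auto
  then have "ainv i * g = g * ainv i" using assms ainv_I[OF nil I] by simp
  then show ?thesis unfolding rh_def rho_LL[OF e] by (rule LL_mult)
qed

lemma ybmap_eq: "ybmap S I (x, y) = (sg x y, rh (sg x y) x)"
  unfolding ybmap_def Let_def sg_def rh_def by simp

end


theorem mainTheorem12:
  fixes S I X J :: "'a::ring set" and g :: "'a \<Rightarrow> 'a"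
  assumes nil: "nilpotent_ring TYPE('a)"
    and S: "is_subring S" and I: "is_ideal I"
    and SI: "S \<inter> I = {0}" and sum: "\<forall>x. \<exists>s\<in>S. \<exists>i\<in>I. x = s + i"
    and sol: "is_solution X (ybmap S I)"
    and J: "is_ideal J" "J \<subseteq> I \<inter> X"
    and gX: "\<forall>x\<in>X. g x \<in> X"
    and gcomm: "\<forall>x\<in>X. \<forall>z\<in>I. g x * z = z * g x"
    and gJinv: "\<forall>x\<in>X. \<forall>j\<in>J. x + j \<in> X \<longrightarrow> g (x + j) = g x"
    and gJ: "\<forall>x\<in>X. g x \<in> J"
    and gsq: "\<forall>x\<in>X. adj (g x) (g x) = 0"
    and kX: "\<forall>x\<in>X. x + x * g x \<in> X"
  shows "is_reflection X (ybmap S I) (\<lambda>x. x + x * g x)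
         \<and> (\<forall>x\<in>X. (\<lambda>x. x + x * g x) ((\<lambda>x. x + x * g x) x) = x)"
proof -
  note ctx = nil S I SI sum
  define k where "k = (\<lambda>x. x + x * g x)"
  let ?sg = "sg S I" and ?rh = "rh S I"
  have JI: "J \<subseteq> I" using J by blast
  have Jmul: "\<And>x z. x \<in> J \<Longrightarrow> z * x \<in> J" and Jadd: "\<And>x y. x \<in> J \<Longrightarrow> y \<in> J \<Longrightarrow> x + y \<in> J"
    using J(1) unfolding is_ideal_def by blast+
  have rX: "\<And>x y. x \<in> X \<Longrightarrow> y \<in> X \<Longrightarrow> ?sg x y \<in> X \<and> ?rh (?sg x y) x \<in> X"
    using sol unfolding is_solution_def ybmap_eq[OF ctx] by blast
  have ginv: "g y = g x" if "x \<in> X" "y \<in> X" "y - x \<in> J" for x y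
  proof -
    have "x + (y - x) \<in> X" using that by simp
    then have "g (x + (y - x)) = g x" using gJinv that by blast
    then show ?thesis by simp
  qed
  have gk: "g (k x) = g x" if "x \<in> X" for x
    using ginv[OF that kX[rule_format, OF that]] Jmul gJ that unfolding k_def by simp
  have kk: "k (k x) = x" if x: "x \<in> X" for x
  proof -
    have "k (k x) = x + x * adj (g x) (g x)"
      unfolding k_def using gk[OF x] unfolding k_def by (simp add: adj_def algebra_simps)
    then show ?thesis using gsq x by simp
  qed
  have refl: "(ybmap S I \<circ> id_times k \<circ> ybmap S I \<circ> id_times k) (x, y)
      = (id_times k \<circ> ybmap S I \<circ> id_times k \<circ> ybmap S I) (x, y)" if x: "x \<in> X" and y: "y \<in> X" for x y
  proof -
    have ky: "k y \<in> X" using kX y unfolding k_def by blast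
    define a where "a = ?sg x y"
    define b where "b = ?rh a x"
    have abX: "a \<in> X" "b \<in> X" using rX[OF x y] unfolding a_def b_def by auto
    define u where "u = ?sg x (k y)"
    define v where "v = ?rh u x"
    have uvX: "u \<in> X" "v \<in> X" using rX[OF x ky] unfolding u_def v_def by auto
    have gyc: "\<forall>z\<in>I. g y * z = z * g y" using gcomm y by blast
    have u: "u = a + a * g y" unfolding u_def a_def k_def using sg_mult[OF ctx gyc] by blast
    have "u - a \<in> J" unfolding u using Jmul gJ y by simp
    then have "v - b \<in> J" unfolding v_def b_def using rh_shift[OF ctx J(1) JI] by blast
    then have gvb: "g v = g b" using ginv[OF abX(2) uvX(2)] by blast
    have kvX: "k v \<in> X" and kbX: "k b \<in> X" using kX uvX abX unfolding k_def by blast+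
    have gvc: "\<forall>z\<in>I. g v * z = z * g v" using gcomm uvX by blast
    have gbc: "\<forall>z\<in>I. g b * z = z * g b" using gcomm abX by blast
    define c where "c = x + x * g b"
    have "?sg u (k v) = ?sg u v + ?sg u v * g v" unfolding k_def by (rule sg_mult[OF ctx gvc])
    also have "?sg u v = x" unfolding v_def by (rule sg_rh[OF ctx])
    finally have c1: "?sg u (k v) = c" unfolding c_def gvb .
    have "?sg a (k b) = ?sg a b + ?sg a b * g b" unfolding k_def by (rule sg_mult[OF ctx gbc])
    also have "?sg a b = x" unfolding b_def by (rule sg_rh[OF ctx])
    finally have c2: "?sg a (k b) = c" unfolding c_def .
    define w where "w = ?rh c a"
    have wX: "w \<in> X" using rX[OF abX(1) kbX] c2 unfolding w_def by simp
    have "c - x \<in> J" unfolding c_def using Jmul gJ abX by simp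
    then have "w - ?rh x a \<in> J" unfolding w_def using rh_shift[OF ctx J(1) JI] by blast
    then have "w - y \<in> J" unfolding a_def rh_sg[OF ctx] .
    then have gwy: "g w = g y" using ginv[OF y wX] by blast
    have L: "(ybmap S I \<circ> id_times k \<circ> ybmap S I \<circ> id_times k) (x, y) = (c, ?rh c u)"
      using c1 unfolding comp_def id_times_def ybmap_eq[OF ctx] fst_conv snd_conv u_def[symmetric]
        v_def[symmetric] by simp
    have R: "(id_times k \<circ> ybmap S I \<circ> id_times k \<circ> ybmap S I) (x, y) = (c, k w)"
      using c2 unfolding comp_def id_times_def ybmap_eq[OF ctx] fst_conv snd_conv a_def[symmetric]
        b_def[symmetric] w_def by simp
    have "?rh c u = k w" unfolding u rh_mult[OF ctx gyc] k_def w_def[symmetric] gwy ..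
    then show ?thesis using L R by simp
  qed
  show ?thesis unfolding is_reflection_def using refl kk unfolding k_def by blast
qed

end
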